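(* Let $\mathcal E$ be a centered $\mathcal A$-$\mathcal A$-bimodule and $\sigma^{\rm can}$ its canonical flip. For $(i,j)\in\{(1,2),(1,3),(2,3)\}$ let $P^{\rm can}_{ij}=\frac12(1+\sigma^{\rm can}_{ij})$ on $\mathcal E\otimes_{\mathcal A}\mathcal E\otimes_{\mathcal A}\mathcal E$. Then $P^{\rm can}_{12}|_{\mathrm{Ran}(P^{\rm can}_{23})}:\mathrm{Ran}(P^{\rm can}_{23})\to\mathrm{Ran}(P^{\rm can}_{12})$ and $P^{\rm can}_{23}|_{\mathrm{Ran}(P^{\rm can}_{12})}:\mathrm{Ran}(P^{\rm can}_{12})\to\mathrm{Ran}(P^{\rm can}_{23})$ are bimodule isomorphisms.
   Context: $\mathcal A$ is a complex unital $*$-subalgebra of a $C^*$-algebra. The center of a bimodule is $\mathcal Z(\mathcal E)=\{e\in\mathcal E: ea=ae\ \forall a\in\mathcal A\}$; $\mathcal E$ is centered if the right $\mathcal A$-linear span of $\mathcal Z(\mathcal E)$ is $\mathcal E$. For centered $\mathcal E$, $\sigma^{\rm can}$ is the unique $\mathcal A$-bimodule isomorphism of $\mathcal E\otimes_{\mathcal A}\mathcal E$ with $\sigma^{\rm can}(\omega\otimes\eta)=\eta\otimes\omega$ for $\omega,\eta\in\mathcal Z(\mathcal E)$ (it exists, and $(\sigma^{\rm can})^2=\mathrm{id}$). $\sigma^{\rm can}_{12}=\sigma^{\rm can}\otimes\mathrm{id}$, $\sigma^{\rm can}_{23}=\mathrm{id}\otimes\sigma^{\rm can}$, $\sigma^{\rm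 can}_{13}=\sigma^{\rm can}_{12}\sigma^{\rm can}_{23}\sigma^{\rm can}_{12}$. *)

theory Defs
  imports "HOL-Analysis.Analysis"
begin

definition complex_scaling :: "(complex \<Rightarrow> 'c::real_normed_algebra_1 \<Rightarrow> 'c) \<Rightarrow> bool" where
  "complex_scaling sc \<longleftrightarrow> Vector_Spaces.vector_space sc
     \<and> (\<forall>r a. sc (complex_of_real r) a = r *\<^sub>R a)
     \<and> (\<forall>c a b. sc c (a * b) = sc c a * b \<and> sc c (a * b) = a * sc c b)
     \<and> (\<forall>c a. norm (sc c a) = cmod c * norm a)"

definition cstar_algebra :: "(complex \<Rightarrow> 'c::{real_normed_algebra_1,banach} \<Rightarrow> 'c) \<Rightarrow> ('c \<Rightarrow> 'c) \<Rightarrow> bool" where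
  "cstar_algebra sc st \<longleftrightarrow> complex_scaling sc
     \<and> (\<forall>a b. st (a + b) = st a + st b)
     \<and> (\<forall>c a. st (sc c a) = sc (cnj c) (st a))
     \<and> (\<forall>a b. st (a * b) = st b * st a)
     \<and> (\<forall>a. st (st a) = a)
     \<and> (\<forall>a. norm (st a * a) = (norm a)\<^sup>2)"

definition unital_star_subalgebra :: "(complex \<Rightarrow> 'c::ring_1 \<Rightarrow> 'c) \<Rightarrow> ('c \<Rightarrow> 'c) \<Rightarrow> 'c set \<Rightarrow> bool" where
  "unital_star_subalgebra sc st A \<longleftrightarrow> module.subspace sc A \<and> 1 \<in> A
     \<and> (\<forall>a\<in>A. \<forall>b\<in>A. a * b \<in> A) \<and> (\<forall>a\<in>A. st a \<in> A)"

definition bimodule :: "(complex \<Rightarrow> 'c::ring_1 \<Rightarrow> 'c) \<Rightarrow> 'c set \<Rightarrow> ('c \<Rightarrow> 'e::ab_group_add \<Rightarrow> 'e) \<Rightarrow> ('e \<Rightarrow> 'c \<Rightarrow> 'e) \<Rightarrow> bool" where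
  "bimodule sc A la ra \<longleftrightarrow> (\<forall>a\<in>A. \<forall>b\<in>A. \<forall>x y.
       la a (x + y) = la a x + la a y \<and> la (a + b) x = la a x + la b x
     \<and> la (a * b) x = la a (la b x) \<and> la 1 x = x
     \<and> ra (x + y) a = ra x a + ra y a \<and> ra x (a + b) = ra x a + ra x b
     \<and> ra x (a * b) = ra (ra x a) b \<and> ra x 1 = x
     \<and> la a (ra x b) = ra (la a x) b)
   \<and> (\<forall>c x. la (sc c 1) x = ra x (sc c 1))"

definition bscale :: "(complex \<Rightarrow> 'c::ring_1 \<Rightarrow> 'c) \<Rightarrow> ('c \<Rightarrow> 'e \<Rightarrow> 'e) \<Rightarrow> complex \<Rightarrow> 'e \<Rightarrow> 'e" where
  "bscale sc la c x = la (sc c 1) x"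

definition bimod_center :: "'c set \<Rightarrow> ('c \<Rightarrow> 'e \<Rightarrow> 'e) \<Rightarrow> ('e \<Rightarrow> 'c \<Rightarrow> 'e) \<Rightarrow> 'e set" where
  "bimod_center A la ra = {e. \<forall>a\<in>A. ra e a = la a e}"

definition centered :: "'c set \<Rightarrow> ('c \<Rightarrow> 'e::ab_group_add \<Rightarrow> 'e) \<Rightarrow> ('e \<Rightarrow> 'c \<Rightarrow> 'e) \<Rightarrow> bool" where
  "centered A la ra \<longleftrightarrow> (\<forall>e. \<exists>(n::nat) z a. (\<forall>i<n. z i \<in> bimod_center A la ra \<and> a i \<in> A)
       \<and> e = (\<Sum>i<n. ra (z i) (a i)))"

definition bimod_hom :: "'c set \<Rightarrow> ('c \<Rightarrow> 'e::ab_group_add \<Rightarrow> 'e) \<Rightarrow> ('e \<Rightarrow> 'c \<Rightarrow> 'e)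
    \<Rightarrow> ('c \<Rightarrow> 'f::ab_group_add \<Rightarrow> 'f) \<Rightarrow> ('f \<Rightarrow> 'c \<Rightarrow> 'f) \<Rightarrow> ('e \<Rightarrow> 'f) \<Rightarrow> bool" where
  "bimod_hom A la ra la' ra' f \<longleftrightarrow> (\<forall>x y. f (x + y) = f x + f y)
     \<and> (\<forall>a\<in>A. \<forall>x. f (la a x) = la' a (f x) \<and> f (ra x a) = ra' (f x) a)"

definition bimod_iso_on :: "'c set \<Rightarrow> ('c \<Rightarrow> 'e::ab_group_add \<Rightarrow> 'e) \<Rightarrow> ('e \<Rightarrow> 'c \<Rightarrow> 'e)
    \<Rightarrow> ('c \<Rightarrow> 'f::ab_group_add \<Rightarrow> 'f) \<Rightarrow> ('f \<Rightarrow> 'c \<Rightarrow> 'f) \<Rightarrow> 'e set \<Rightarrow> 'f set \<Rightarrow> ('e \<Rightarrow> 'f) \<Rightarrow> bool" where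
  "bimod_iso_on A la ra la' ra' U V f \<longleftrightarrow> bij_betw f U V
     \<and> (\<forall>x\<in>U. \<forall>y\<in>U. f (x + y) = f x + f y)
     \<and> (\<forall>a\<in>A. \<forall>x\<in>U. f (la a x) = la' a (f x) \<and> f (ra x a) = ra' (f x) a)"

(* (T, tp) is the (algebraic) balanced tensor product M \<otimes>_A N of bimodules, with its
   bimodule structure; universal property w.r.t. A-balanced biadditive maps into \<complex>
   (which for T a complex bimodule characterises M \<otimes>_A N up to isomorphism) *)
definition is_tensor :: "(complex \<Rightarrow> 'c::ring_1 \<Rightarrow> 'c) \<Rightarrow> 'c set
    \<Rightarrow> ('c \<Rightarrow> 'm::ab_group_add \<Rightarrow> 'm) \<Rightarrow> ('m \<Rightarrow> 'c \<Rightarrow> 'm)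
    \<Rightarrow> ('c \<Rightarrow> 'n::ab_group_add \<Rightarrow> 'n) \<Rightarrow> ('n \<Rightarrow> 'c \<Rightarrow> 'n)
    \<Rightarrow> ('c \<Rightarrow> 't::ab_group_add \<Rightarrow> 't) \<Rightarrow> ('t \<Rightarrow> 'c \<Rightarrow> 't) \<Rightarrow> ('m \<Rightarrow> 'n \<Rightarrow> 't) \<Rightarrow> bool" where
  "is_tensor sc A la1 ra1 la2 ra2 laT raT tp \<longleftrightarrow> bimodule sc A laT raT
     \<and> (\<forall>x x' y. tp (x + x') y = tp x y + tp x' y)
     \<and> (\<forall>x y y'. tp x (y + y') = tp x y + tp x y')
     \<and> (\<forall>a\<in>A. \<forall>x y. tp (ra1 x a) y = tp x (la2 a y))
     \<and> (\<forall>a\<in>A. \<forall>x y. laT a (tp x y) = tp (la1 a x) y \<and> raT (tp x y) a = tp x (ra2 y a))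
     \<and> (\<forall>f :: 'm \<Rightarrow> 'n \<Rightarrow> complex.
          ((\<forall>x x' y. f (x + x') y = f x y + f x' y) \<and> (\<forall>x y y'. f x (y + y') = f x y + f x y')
           \<and> (\<forall>a\<in>A. \<forall>x y. f (ra1 x a) y = f x (la2 a y)))
          \<longrightarrow> (\<exists>!g :: 't \<Rightarrow> complex. (\<forall>s t. g (s + t) = g s + g t) \<and> (\<forall>x y. g (tp x y) = f x y)))"

definition half_sum :: "(complex \<Rightarrow> 'c::ring_1 \<Rightarrow> 'c) \<Rightarrow> ('c \<Rightarrow> 'e::ab_group_add \<Rightarrow> 'e) \<Rightarrow> ('e \<Rightarrow> 'e) \<Rightarrow> 'e \<Rightarrow> 'e" where
  "half_sum sc la s x = bscale sc la (1/2) (x + s x)"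

end

theory Submission imports Defs begin

lemma addD:
  fixes f :: "'a::ab_group_add \<Rightarrow> 'b::ab_group_add"
  assumes "\<And>x y. f (x + y) = f x + f y"
  shows "f 0 = 0" "f (- x) = - f x" "f (x - y) = f x - f y"
  using additive.zero[OF additive.intro, OF assms] additive.minus[OF additive.intro, OF assms]
    additive.diff[OF additive.intro, OF assms] by auto

lemma sep:
  fixes s :: "complex \<Rightarrow> 't::ab_group_add \<Rightarrow> 't"
  assumes vs: "vector_space s" and v: "v \<noteq> 0"
  shows "\<exists>g::'t \<Rightarrow> complex. (\<forall>x y. g (x + y) = g x + g y) \<and> g v \<noteq> 0"
proof -
  interpret vp: vector_space_pair s "\<lambda>x y::complex. x * y"
    unfolding vector_space_pair_def using vs
    by (auto simp: vector_space_def algebra_simps)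
  have "vp.vs1.independent {v}" using v vp.vs1.dependent_single by blast
  from vp.linear_independent_extend[OF this, of "\<lambda>_. 1"]
  obtain g where g: "Vector_Spaces.linear s (\<lambda>x y. x * y) g" "g v = 1" by auto
  then show ?thesis unfolding Vector_Spaces.linear_iff by (intro exI[of _ g]) auto
qed

lemma cstar_sc:
  assumes "cstar_algebra sc st"
  shows "vector_space sc" "sc 1 1 = 1" "sc a 1 + sc b 1 = sc (a + b) 1"
    "sc a 1 * sc b 1 = sc (a * b) 1" "sc c 1 * x = x * sc c 1"
proof -
  have cs: "complex_scaling sc" using assms cstar_algebra_def by blast
  show vs: "vector_space sc" using cs complex_scaling_def by blast
  have r: "sc (complex_of_real r) a = r *\<^sub>R a" for r a using cs complex_scaling_def by blast
  show "sc 1 1 = 1" using r[of 1 1] by simp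
  show "sc a 1 + sc b 1 = sc (a + b) 1" using vs unfolding vector_space_def by simp
  have m: "sc c (x * y) = sc c x * y" "sc c (x * y) = x * sc c y" for c x y
    using cs complex_scaling_def by blast+
  show "sc a 1 * sc b 1 = sc (a * b) 1"
    using m(1)[of a 1 "sc b 1"] vs unfolding vector_space_def by simp
  show "sc c 1 * x = x * sc c 1" using m(1)[of c 1 x] m(2)[of c x 1] by simp
qed

lemma subalg_sc:
  assumes "cstar_algebra sc st" "unital_star_subalgebra sc st A"
  shows "sc c 1 \<in> A" "1 \<in> A" "a \<in> A \<Longrightarrow> b \<in> A \<Longrightarrow> a * b \<in> A"
proof -
  have S: "module.subspace sc A" "1 \<in> A" "\<forall>a\<in>A. \<forall>b\<in>A. a * b \<in> A"
    using assms(2) unfolding unital_star_subalgebra_def by auto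
  have md: "module sc" using cstar_sc(1)[OF assms(1)] module_iff_vector_space by blast
  from S(1) show "sc c 1 \<in> A" using S(2) unfolding module.subspace_def[OF md] by blast
  show "1 \<in> A" by fact
  show "a \<in> A \<Longrightarrow> b \<in> A \<Longrightarrow> a * b \<in> A" using S by blast
qed

lemma bimodD:
  assumes "bimodule sc A la ra" "a \<in> A" "b \<in> A"
  shows "la a (x + y) = la a x + la a y" "la (a + b) x = la a x + la b x"
     "la (a * b) x = la a (la b x)" "la 1 x = x"
     "ra (x + y) a = ra x a + ra y a" "ra x (a + b) = ra x a + ra x b"
     "ra x (a * b) = ra (ra x a) b" "ra x 1 = x"
     "la a (ra x b) = ra (la a x) b"
  using assms unfolding bimodule_def by blast+

lemma bimod_vs:
  assumes "cstar_algebra sc st" "unital_star_subalgebra sc st A" "bimodule sc A la ra"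
  shows "vector_space (\<lambda>c x. la (sc c 1) x)"
proof -
  note S = cstar_sc[OF assms(1)] subalg_sc[OF assms(1,2)]
  note B = bimodD[OF assms(3) S(6) S(6)]
  show ?thesis unfolding vector_space_def
  proof (intro allI conjI)
    fix a b :: complex and x y
    show "la (sc a 1) (x + y) = la (sc a 1) x + la (sc a 1) y" using bimodD[OF assms(3) S(6) S(6)] by simp
    show "la (sc (a + b) 1) x = la (sc a 1) x + la (sc b 1) x"
      using bimodD(2)[OF assms(3) S(6)[of a] S(6)[of b]] S(3) by simp
    show "la (sc a 1) (la (sc b 1) x) = la (sc (a * b) 1) x"
      using bimodD(3)[OF assms(3) S(6)[of a] S(6)[of b]] S(4) by simp
    show "la (sc 1 1) x = x" using B S(2) by simp
  qed
qed

lemma ex1_uniq: "\<exists>!x. P x \<Longrightarrow> P a \<Longrightarrow> P b \<Longrightarrow> a = b" by blast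

lemma ext_tensor:
  fixes tp :: "'m::ab_group_add \<Rightarrow> 'n::ab_group_add \<Rightarrow> 't::ab_group_add"
    and F G :: "'t \<Rightarrow> 'u::ab_group_add"
  assumes T: "is_tensor sc A la1 ra1 la2 ra2 laT raT tp"
    and sepU: "\<And>w::'u. w \<noteq> 0 \<Longrightarrow> \<exists>g::'u \<Rightarrow> complex. (\<forall>x y. g (x + y) = g x + g y) \<and> g w \<noteq> 0"
    and Fa: "\<And>x y. F (x + y) = F x + F y" and Ga: "\<And>x y. G (x + y) = G x + G y"
    and eq: "\<And>x y. F (tp x y) = G (tp x y)"
  shows "F w = G w"
proof (rule ccontr)
  assume ne: "F w \<noteq> G w"
  then obtain g :: "'u \<Rightarrow> complex" where ga: "\<And>x y. g (x + y) = g x + g y" and gw: "g (F w - G w) \<noteq> 0"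
    using sepU[of "F w - G w"] by auto
  have T1: "\<And>x x' y. tp (x + x') y = tp x y + tp x' y" "\<And>x y y'. tp x (y + y') = tp x y + tp x y'"
    "\<And>a x y. a \<in> A \<Longrightarrow> tp (ra1 x a) y = tp x (la2 a y)"
    using T by (simp_all add: is_tensor_def)
  have U: "\<forall>f :: 'm \<Rightarrow> 'n \<Rightarrow> complex.
          ((\<forall>x x' y. f (x + x') y = f x y + f x' y) \<and> (\<forall>x y y'. f x (y + y') = f x y + f x y')
           \<and> (\<forall>a\<in>A. \<forall>x y. f (ra1 x a) y = f x (la2 a y)))
          \<longrightarrow> (\<exists>!g :: 't \<Rightarrow> complex. (\<forall>s t. g (s + t) = g s + g t) \<and> (\<forall>x y. g (tp x y) = f x y))"
    using T unfolding is_tensor_def apply - by (elim conjE) assumption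
  define f where "f x y = g (F (tp x y))" for x y
  have "(\<forall>x x' y. f (x + x') y = f x y + f x' y) \<and> (\<forall>x y y'. f x (y + y') = f x y + f x y')
           \<and> (\<forall>a\<in>A. \<forall>x y. f (ra1 x a) y = f x (la2 a y))"
    unfolding f_def using T1 Fa ga by simp
  note ex = U[rule_format, OF this]
  have "g \<circ> F = g \<circ> G"
    apply (rule ex1_uniq[OF ex])
    using Fa Ga ga eq by (auto simp: f_def)
  then have "g (F w) = g (G w)" by (simp add: fun_eq_iff)
  then show False using gw addD(3)[of g, OF ga] by simp
qed

lemma cent_zero:
  fixes phi :: "'e::ab_group_add \<Rightarrow> 'g::ab_group_add"
  assumes cent: "centered A la ra"
    and pa: "\<And>x y. phi (x + y) = phi x + phi y"
    and pz: "\<And>z a. z \<in> bimod_center A la ra \<Longrightarrow> a \<in> A \<Longrightarrow> phi (ra z a) = 0"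
  shows "phi x = 0"
proof -
  obtain n :: nat and z a where za: "\<forall>i<n. z i \<in> bimod_center A la ra \<and> a i \<in> A" and x: "x = (\<Sum>i<n. ra (z i) (a i))"
    using cent[unfolded centered_def, rule_format, of x] by blast
  have "phi (\<Sum>i<m. ra (z i) (a i)) = 0" if "m \<le> n" for m
    using that
  proof (induction m)
    case 0
    then show ?case using addD(1)[of phi, OF pa] by simp
  next
    case (Suc m)
    then show ?case using pa pz za by simp
  qed
  then show ?thesis using x by simp
qed

lemma alg:
  fixes h s1 s2 :: "'t::ab_group_add \<Rightarrow> 't"
  assumes ha: "\<And>x y. h (x + y) = h x + h y"
    and s1a: "\<And>x y. s1 (x + y) = s1 x + s1 y"
    and s2a: "\<And>x y. s2 (x + y) = s2 x + s2 y"
    and hh: "\<And>v. h v + h v = v"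
    and s11: "\<And>v. s1 (s1 v) = v" and s22: "\<And>v. s2 (s2 v) = v"
    and br: "\<And>v. s1 (s2 (s1 v)) = s2 (s1 (s2 v))"
    and h1: "\<And>v. h (s1 v) = s1 (h v)" and h2: "\<And>v. h (s2 v) = s2 (h v)"
  shows "bij_betw (\<lambda>x. h (x + s1 x)) (range (\<lambda>x. h (x + s2 x))) (range (\<lambda>x. h (x + s1 x)))"
proof -
  note H = addD[of h, OF ha] and S1 = addD[of s1, OF s1a] and S2 = addD[of s2, OF s2a]
  have hinj: "h a = h b \<Longrightarrow> a = b" for a b using hh[of a] hh[of b] by metis
  have fix2: "s2 (h (u + s2 u)) = h (u + s2 u)" for u by (simp add: h2[symmetric] s2a s22 add.commute)
  have fix1: "s1 (h (u + s1 u)) = h (u + s1 u)" for u by (simp add: h1[symmetric] s1a s11 add.commute)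
  have inj: "inj_on (\<lambda>x. h (x + s1 x)) (range (\<lambda>x. h (x + s2 x)))"
  proof (rule inj_onI)
    fix x y assume "x \<in> range (\<lambda>x. h (x + s2 x))" "y \<in> range (\<lambda>x. h (x + s2 x))"
      and e: "h (x + s1 x) = h (y + s1 y)"
    then have sx: "s2 x = x" and sy: "s2 y = y" using fix2 by auto
    define d where "d = x - y"
    have sd: "s2 d = d" using sx sy S2 by (simp add: d_def)
    have "x + s1 x = y + s1 y" using hinj e by blast
    then have "d + s1 d = 0" unfolding d_def S1 by (simp add: algebra_simps)
    then have s1d: "s1 d = - d" by (simp add: eq_neg_iff_add_eq_0 add.commute)
    have "s1 (s2 (s1 d)) = d" using s1d sd S1 S2 by simp
    moreover have "s2 (s1 (s2 d)) = - d" using s1d sd S1 S2 by simp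
    ultimately have "d = - d" using br by simp
    then have "d + d = 0" by (simp add: eq_neg_iff_add_eq_0)
    moreover have "d = h (d + d)" using hh[of d] ha[of d d] by simp
    ultimately have "d = 0" using H(1) by simp
    then show "x = y" by (simp add: d_def)
  qed
  have sur: "range (\<lambda>x. h (x + s1 x)) \<subseteq> (\<lambda>x. h (x + s1 x)) ` range (\<lambda>x. h (x + s2 x))"
  proof
    fix y assume "y \<in> range (\<lambda>x. h (x + s1 x))"
    then have sy: "s1 y = y" using fix1 by auto
    define x where "x = y + s2 y - s1 (s2 y)"
    have b: "s2 (s1 (s2 y)) = s1 (s2 y)" using br[of y] sy by simp
    have "s2 x = s2 (y + s2 y) - s2 (s1 (s2 y))" unfolding x_def by (rule S2(3))
    also have "\<dots> = s2 y + y - s1 (s2 y)" using s2a s22 b by simp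
    finally have sx: "s2 x = x" by (simp add: x_def algebra_simps)
    have "s1 x = s1 (y + s2 y) - s1 (s1 (s2 y))" unfolding x_def by (rule S1(3))
    also have "\<dots> = y + s1 (s2 y) - s2 y" using s1a s11 sy by simp
    finally have s1x: "s1 x = y + s1 (s2 y) - s2 y" .
    have "h (x + s1 x) = h (y + y)" unfolding s1x by (simp add: x_def algebra_simps)
    also have "\<dots> = y" using ha[of y y] hh[of y] by simp
    finally have "y = h (x + s1 x)" by simp
    moreover have "x = h (x + s2 x)" using sx ha[of x x] hh[of x] by simp
    ultimately show "y \<in> (\<lambda>x. h (x + s1 x)) ` range (\<lambda>x. h (x + s2 x))" by blast
  qed
  have "(\<lambda>x. h (x + s1 x)) ` range (\<lambda>x. h (x + s2 x)) \<subseteq> range (\<lambda>x. h (x + s1 x))"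
    by (rule image_subsetI) (rule rangeI)
  then show ?thesis unfolding bij_betw_def using inj sur by (intro conjI equalityI)
qed

lemma tensorD:
  assumes "is_tensor sc A la1 ra1 la2 ra2 laT raT tp"
  shows "bimodule sc A laT raT" "tp (x + x') y = tp x y + tp x' y" "tp x (y + y') = tp x y + tp x y'"
    "a \<in> A \<Longrightarrow> tp (ra1 x a) y = tp x (la2 a y)"
    "a \<in> A \<Longrightarrow> laT a (tp x y) = tp (la1 a x) y"
    "a \<in> A \<Longrightarrow> raT (tp x y) a = tp x (ra2 y a)"
  using assms by (simp_all add: is_tensor_def)

theorem lemma3p6:
  fixes sc :: "complex \<Rightarrow> 'c::{real_normed_algebra_1,banach} \<Rightarrow> 'c"
    and st :: "'c \<Rightarrow> 'c"
    and A :: "'c set"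
    and la :: "'c \<Rightarrow> 'e::ab_group_add \<Rightarrow> 'e" and ra :: "'e \<Rightarrow> 'c \<Rightarrow> 'e"
    and la2 :: "'c \<Rightarrow> 't2::ab_group_add \<Rightarrow> 't2" and ra2 :: "'t2 \<Rightarrow> 'c \<Rightarrow> 't2"
    and tp :: "'e \<Rightarrow> 'e \<Rightarrow> 't2"
    and la3 :: "'c \<Rightarrow> 't3::ab_group_add \<Rightarrow> 't3" and ra3 :: "'t3 \<Rightarrow> 'c \<Rightarrow> 't3"
    and tpL :: "'t2 \<Rightarrow> 'e \<Rightarrow> 't3" and tpR :: "'e \<Rightarrow> 't2 \<Rightarrow> 't3"
    and \<sigma> :: "'t2 \<Rightarrow> 't2" and \<sigma>12 :: "'t3 \<Rightarrow> 't3" and \<sigma>23 :: "'t3 \<Rightarrow> 't3"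
  assumes cstar: "cstar_algebra sc st"
    and subalg: "unital_star_subalgebra sc st A"
    and bimodE: "bimodule sc A la ra"
    and cent: "centered A la ra"
    and tens2: "is_tensor sc A la ra la ra la2 ra2 tp"
    and tens3L: "is_tensor sc A la2 ra2 la ra la3 ra3 tpL"
    and tens3R: "is_tensor sc A la ra la2 ra2 la3 ra3 tpR"
    and assoc: "\<And>x y z. tpL (tp x y) z = tpR x (tp y z)"
    and sigma_hom: "bimod_hom A la2 ra2 la2 ra2 \<sigma>"
    and sigma_bij: "bij \<sigma>"
    and sigma_flip: "\<And>\<omega> \<eta>. \<omega> \<in> bimod_center A la ra \<Longrightarrow> \<eta> \<in> bimod_center A la ra
                        \<Longrightarrow> \<sigma> (tp \<omega> \<eta>) = tp \<eta> \<omega>"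
    and s12_add: "\<And>u v. \<sigma>12 (u + v) = \<sigma>12 u + \<sigma>12 v"
    and s12_def: "\<And>t z. \<sigma>12 (tpL t z) = tpL (\<sigma> t) z"
    and s23_add: "\<And>u v. \<sigma>23 (u + v) = \<sigma>23 u + \<sigma>23 v"
    and s23_def: "\<And>x t. \<sigma>23 (tpR x t) = tpR x (\<sigma> t)"
  shows "bimod_iso_on A la3 ra3 la3 ra3 (range (half_sum sc la3 \<sigma>23)) (range (half_sum sc la3 \<sigma>12))
           (half_sum sc la3 \<sigma>12)
       \<and> bimod_iso_on A la3 ra3 la3 ra3 (range (half_sum sc la3 \<sigma>12)) (range (half_sum sc la3 \<sigma>23))
           (half_sum sc la3 \<sigma>23)"
proof -
  note SC = cstar_sc[OF cstar]
  note SA = subalg_sc[OF cstar subalg]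
  note T2 = tensorD[OF tens2] and TL = tensorD[OF tens3L] and TR = tensorD[OF tens3R]
  have bm2: "bimodule sc A la2 ra2" by (rule T2(1))
  have bm3: "bimodule sc A la3 ra3" by (rule TL(1))
  have sep2: "\<And>w::'t2. w \<noteq> 0 \<Longrightarrow> \<exists>g::'t2 \<Rightarrow> complex. (\<forall>x y. g (x + y) = g x + g y) \<and> g w \<noteq> 0"
    by (rule sep[OF bimod_vs[OF cstar subalg bm2]])
  have sep3: "\<And>w::'t3. w \<noteq> 0 \<Longrightarrow> \<exists>g::'t3 \<Rightarrow> complex. (\<forall>x y. g (x + y) = g x + g y) \<and> g w \<noteq> 0"
    by (rule sep[OF bimod_vs[OF cstar subalg bm3]])
  have sa: "\<sigma> (x + y) = \<sigma> x + \<sigma> y" for x y using sigma_hom unfolding bimod_hom_def by blast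
  have sl: "a \<in> A \<Longrightarrow> \<sigma> (la2 a t) = la2 a (\<sigma> t)" for a t using sigma_hom unfolding bimod_hom_def by blast
  have sr: "a \<in> A \<Longrightarrow> \<sigma> (ra2 t a) = ra2 (\<sigma> t) a" for a t using sigma_hom unfolding bimod_hom_def by blast
  have cen: "z \<in> bimod_center A la ra \<Longrightarrow> a \<in> A \<Longrightarrow> ra z a = la a z" for z a
    unfolding bimod_center_def by blast
  have el2: "tp (ra z a) (ra w b) = ra2 (tp z w) (a * b)"
    if "z \<in> bimod_center A la ra" "w \<in> bimod_center A la ra" "a \<in> A" "b \<in> A" for z w a b
  proof -
    have "tp (ra z a) (ra w b) = tp z (la a (ra w b))" using T2(4) that by simp
    also have "\<dots> = tp z (ra (la a w) b)" using bimodD(9)[OF bimodE that(3,4)] by simp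
    also have "\<dots> = tp z (ra (ra w a) b)" using cen that by simp
    also have "\<dots> = tp z (ra w (a * b))" using bimodD(7)[OF bimodE that(3,4)] by simp
    also have "\<dots> = ra2 (tp z w) (a * b)" using T2(6) SA(3) that by simp
    finally show ?thesis .
  qed
  have ss: "\<sigma> (\<sigma> t) = t" for t
  proof (rule ext_tensor[OF tens2 sep2, of "\<lambda>t. \<sigma> (\<sigma> t)" "\<lambda>t. t"])
    show "\<sigma> (\<sigma> (x + y)) = \<sigma> (\<sigma> x) + \<sigma> (\<sigma> y)" for x y by (simp add: sa)
    show "x + y = x + y" for x y :: 't2 by simp
    fix x y
    show "\<sigma> (\<sigma> (tp x y)) = tp x y"
    proof -
      have "\<sigma> (\<sigma> (tp x y)) - tp x y = 0"
      proof (rule cent_zero[OF cent, of "\<lambda>x. \<sigma> (\<sigma> (tp x y)) - tp x y"])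
        show "\<sigma> (\<sigma> (tp (x + x') y)) - tp (x + x') y =
              (\<sigma> (\<sigma> (tp x y)) - tp x y) + (\<sigma> (\<sigma> (tp x' y)) - tp x' y)" for x x'
          by (simp add: T2(2) sa algebra_simps)
        fix z a assume z: "z \<in> bimod_center A la ra" and a: "a \<in> A"
        show "\<sigma> (\<sigma> (tp (ra z a) y)) - tp (ra z a) y = 0"
        proof (rule cent_zero[OF cent, of "\<lambda>y. \<sigma> (\<sigma> (tp (ra z a) y)) - tp (ra z a) y"])
          show "\<sigma> (\<sigma> (tp (ra z a) (y + y'))) - tp (ra z a) (y + y') =
              (\<sigma> (\<sigma> (tp (ra z a) y)) - tp (ra z a) y) + (\<sigma> (\<sigma> (tp (ra z a) y')) - tp (ra z a) y')" for y y'
            by (simp add: T2(3) sa algebra_simps)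
          fix w b assume w: "w \<in> bimod_center A la ra" and b: "b \<in> A"
          have ab: "a * b \<in> A" using SA(3) a b by blast
          show "\<sigma> (\<sigma> (tp (ra z a) (ra w b))) - tp (ra z a) (ra w b) = 0"
            using el2[OF z w a b] sr[OF ab] sigma_flip z w by simp
        qed
      qed
      then show ?thesis by simp
    qed
  qed
  have bm3D: "la3 a (x + y) = la3 a x + la3 a y" "ra3 (x + y) a = ra3 x a + ra3 y a" if "a \<in> A" for a x y
    using bimodD[OF bm3 that that] by auto
  have s12l: "\<sigma>12 (la3 a u) = la3 a (\<sigma>12 u)" if a: "a \<in> A" for a u
    by (rule ext_tensor[OF tens3L sep3]) (simp_all add: s12_add bm3D[OF a] TL(5)[OF a] s12_def sl[OF a])
  have s12r: "\<sigma>12 (ra3 u a) = ra3 (\<sigma>12 u) a" if a: "a \<in> A" for a u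
    by (rule ext_tensor[OF tens3L sep3]) (simp_all add: s12_add bm3D[OF a] TL(6)[OF a] s12_def)
  have s23l: "\<sigma>23 (la3 a u) = la3 a (\<sigma>23 u)" if a: "a \<in> A" for a u
    by (rule ext_tensor[OF tens3R sep3]) (simp_all add: s23_add bm3D[OF a] TR(5)[OF a] s23_def)
  have s23r: "\<sigma>23 (ra3 u a) = ra3 (\<sigma>23 u) a" if a: "a \<in> A" for a u
    by (rule ext_tensor[OF tens3R sep3]) (simp_all add: s23_add bm3D[OF a] TR(6)[OF a] s23_def sr[OF a])
  have s11: "\<sigma>12 (\<sigma>12 u) = u" for u
    by (rule ext_tensor[OF tens3L sep3]) (simp_all add: s12_add s12_def ss)
  have s22: "\<sigma>23 (\<sigma>23 u) = u" for u
    by (rule ext_tensor[OF tens3R sep3]) (simp_all add: s23_add s23_def ss)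
  have el3: "tpL (tp (ra z1 a1) (ra z2 a2)) (ra z3 a3) = ra3 (tpL (tp z1 z2) z3) ((a1 * a2) * a3)"
    if z: "z1 \<in> bimod_center A la ra" "z2 \<in> bimod_center A la ra" "z3 \<in> bimod_center A la ra"
      and a: "a1 \<in> A" "a2 \<in> A" "a3 \<in> A" for z1 z2 z3 a1 a2 a3
  proof -
    have c: "a1 * a2 \<in> A" using SA(3) a by blast
    have "tpL (tp (ra z1 a1) (ra z2 a2)) (ra z3 a3) = tpL (ra2 (tp z1 z2) (a1 * a2)) (ra z3 a3)"
      using el2 z a by simp
    also have "\<dots> = tpL (tp z1 z2) (la (a1 * a2) (ra z3 a3))" using TL(4)[OF c] by simp
    also have "\<dots> = tpL (tp z1 z2) (ra (la (a1 * a2) z3) a3)" using bimodD(9)[OF bimodE c a(3)] by simp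
    also have "\<dots> = tpL (tp z1 z2) (ra (ra z3 (a1 * a2)) a3)" using cen z(3) c by simp
    also have "\<dots> = tpL (tp z1 z2) (ra z3 ((a1 * a2) * a3))" using bimodD(7)[OF bimodE c a(3)] by simp
    also have "\<dots> = ra3 (tpL (tp z1 z2) z3) ((a1 * a2) * a3)" using TL(6) SA(3) c a by simp
    finally show ?thesis .
  qed
  have e1: "\<sigma>12 (tpL (tp a b) c) = tpL (tp b a) c"
    if "a \<in> bimod_center A la ra" "b \<in> bimod_center A la ra" for a b c
    using that by (simp add: s12_def sigma_flip)
  have e2: "\<sigma>23 (tpL (tp a b) c) = tpL (tp a c) b"
    if "b \<in> bimod_center A la ra" "c \<in> bimod_center A la ra" for a b c
  proof -
    have "\<sigma>23 (tpL (tp a b) c) = \<sigma>23 (tpR a (tp b c))" by (simp add: assoc)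
    also have "\<dots> = tpR a (tp c b)" using that by (simp add: s23_def sigma_flip)
    also have "\<dots> = tpL (tp a c) b" by (simp add: assoc)
    finally show ?thesis .
  qed
  define F where "F u = \<sigma>12 (\<sigma>23 (\<sigma>12 u)) - \<sigma>23 (\<sigma>12 (\<sigma>23 u))" for u
  have Fa: "F (u + v) = F u + F v" for u v by (simp add: F_def s12_add s23_add algebra_simps)
  have Fr: "F (ra3 u d) = ra3 (F u) d" if "d \<in> A" for u d
    using that by (simp add: F_def s12r s23r addD(3)[of "\<lambda>x. ra3 x d", OF bm3D(2)[OF that]])
  have F3: "F (tpL (tp x y) z) = 0" for x y z
  proof (rule cent_zero[OF cent, of "\<lambda>x. F (tpL (tp x y) z)"])
    show "F (tpL (tp (x + x') y) z) = F (tpL (tp x y) z) + F (tpL (tp x' y) z)" for x x'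
      by (simp add: T2(2) TL(2) Fa)
    fix z1 a1 assume z1: "z1 \<in> bimod_center A la ra" and a1: "a1 \<in> A"
    show "F (tpL (tp (ra z1 a1) y) z) = 0"
    proof (rule cent_zero[OF cent, of "\<lambda>y. F (tpL (tp (ra z1 a1) y) z)"])
      show "F (tpL (tp (ra z1 a1) (y + y')) z) = F (tpL (tp (ra z1 a1) y) z) + F (tpL (tp (ra z1 a1) y') z)" for y y'
        by (simp add: T2(3) TL(2) Fa)
      fix z2 a2 assume z2: "z2 \<in> bimod_center A la ra" and a2: "a2 \<in> A"
      show "F (tpL (tp (ra z1 a1) (ra z2 a2)) z) = 0"
      proof (rule cent_zero[OF cent, of "\<lambda>z. F (tpL (tp (ra z1 a1) (ra z2 a2)) z)"])
        show "F (tpL (tp (ra z1 a1) (ra z2 a2)) (z + z')) = F (tpL (tp (ra z1 a1) (ra z2 a2)) z) + F (tpL (tp (ra z1 a1) (ra z2 a2)) z')" for z z'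
          by (simp add: TL(3) Fa)
        fix z3 a3 assume z3: "z3 \<in> bimod_center A la ra" and a3: "a3 \<in> A"
        have d: "(a1 * a2) * a3 \<in> A" using SA(3) a1 a2 a3 by blast
        have "F (tpL (tp z1 z2) z3) = 0" unfolding F_def using z1 z2 z3 by (simp add: e1 e2)
        then show "F (tpL (tp (ra z1 a1) (ra z2 a2)) (ra z3 a3)) = 0"
          using el3[OF z1 z2 z3 a1 a2 a3] Fr[OF d] addD(1)[of "\<lambda>x. ra3 x ((a1 * a2) * a3)", OF bm3D(2)[OF d]]
          by simp
      qed
    qed
  qed
  have braid: "\<sigma>12 (\<sigma>23 (\<sigma>12 u)) = \<sigma>23 (\<sigma>12 (\<sigma>23 u))" for u
  proof -
    have "F u = 0"
    proof (rule ext_tensor[OF tens3L sep3, of F "\<lambda>_. 0", simplified])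
      show "F (x + y) = F x + F y" for x y by (rule Fa)
      fix t z
      show "F (tpL t z) = 0"
        by (rule ext_tensor[OF tens2 sep3, of "\<lambda>t. F (tpL t z)" "\<lambda>_. 0", simplified])
           (simp_all add: Fa TL(2) F3)
    qed
    then show ?thesis by (simp add: F_def)
  qed
  define hf where "hf = sc (1/2) 1"
  have hfA: "hf \<in> A" unfolding hf_def by (rule SA(1))
  define h where "h u = la3 hf u" for u
  have hs: "half_sum sc la3 s = (\<lambda>x. h (x + s x))" for s
    by (simp add: fun_eq_iff half_sum_def bscale_def h_def hf_def)
  have ha: "h (x + y) = h x + h y" for x y unfolding h_def by (rule bm3D(1)[OF hfA])
  have hh: "h v + h v = v" for v
  proof -
    have "h v + h v = la3 (hf + hf) v" unfolding h_def using bimodD(2)[OF bm3 hfA hfA] by simp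
    also have "hf + hf = 1" unfolding hf_def using SC(3)[of "1/2" "1/2"] SC(2) by simp
    finally show ?thesis using bimodD(4)[OF bm3 hfA hfA] by simp
  qed
  have h12: "h (\<sigma>12 v) = \<sigma>12 (h v)" for v unfolding h_def using s12l[OF hfA] by simp
  have h23: "h (\<sigma>23 v) = \<sigma>23 (h v)" for v unfolding h_def using s23l[OF hfA] by simp
  have hl: "h (la3 a x) = la3 a (h x)" if a: "a \<in> A" for a x
    unfolding h_def using bimodD(3)[OF bm3 hfA a] bimodD(3)[OF bm3 a hfA] SC(5)[of "1/2" a]
    by (simp add: hf_def)
  have hr: "h (ra3 x a) = ra3 (h x) a" if a: "a \<in> A" for a x
    unfolding h_def using bimodD(9)[OF bm3 hfA a] by simp
  have homs: "\<forall>a\<in>A. \<forall>x\<in>U. h (la3 a x + s (la3 a x)) = la3 a (h (x + s x)) \<and>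
                 h (ra3 x a + s (ra3 x a)) = ra3 (h (x + s x)) a"
    if sl': "\<And>a u. a \<in> A \<Longrightarrow> s (la3 a u) = la3 a (s u)"
      and sr': "\<And>a u. a \<in> A \<Longrightarrow> s (ra3 u a) = ra3 (s u) a" for s :: "'t3 \<Rightarrow> 't3" and U
    by (simp add: sl' sr' bm3D hl hr flip: bm3D(1) bm3D(2))
  have B1: "bij_betw (\<lambda>x. h (x + \<sigma>12 x)) (range (\<lambda>x. h (x + \<sigma>23 x))) (range (\<lambda>x. h (x + \<sigma>12 x)))"
    by (rule alg[OF ha s12_add s23_add hh s11 s22 braid h12 h23])
  have B2: "bij_betw (\<lambda>x. h (x + \<sigma>23 x)) (range (\<lambda>x. h (x + \<sigma>12 x))) (range (\<lambda>x. h (x + \<sigma>23 x)))"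
    by (rule alg[OF ha s23_add s12_add hh s22 s11 braid[symmetric] h23 h12])
  show ?thesis
    unfolding bimod_iso_on_def hs
    using B1 B2 homs[OF s12l s12r] homs[OF s23l s23r]
    by (simp add: ha s12_add s23_add algebra_simps)
qed

end
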